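(* If $R \in \mathcal{R}$, then (1) $R \subseteq \mathcal{N}$, and (2) $R$ contains every $\lambda$-variable.
   Context: With disjoint sets of $\lambda$-variables $x,y,\dots$ and $\mu$-variables $a,b,\dots$, terms and $\mathcal{E}$-terms are $\mathcal{T} ::= x \mid \lambda x.\mathcal{T} \mid (\mathcal{T}\;\mathcal{E}) \mid \langle \mathcal{T},\mathcal{T}\rangle \mid \omega_1\mathcal{T} \mid \omega_2\mathcal{T} \mid \mu a.\mathcal{T} \mid (a\;\mathcal{T})$, $\mathcal{E} ::= \mathcal{T} \mid \pi_1 \mid \pi_2 \mid [x.\mathcal{T}, y.\mathcal{T}]$ (up to renaming of bound variables). The one-step reduction $\triangleright$ is the closure under all constructors of: $(\lambda x.u\;v)\triangleright u[x:=v]$; $(\langle t_1,t_2\rangle\;\pi_i)\triangleright t_i$; $(\omega_i t\;[x_1.u_1,x_2.u_2])\triangleright u_i[x_i:=t]$; $((t\;[x_1.u_1,x_2.u_2])\;\varepsilon)\triangleright(t\;[x_1.(u_1\;\varepsilon),x_2.(u_2\;\varepsilon)])$; $(\mu a.t\;\varepsilon)\triangleright\mu a.t[a:=^*\varepsilon]$, where $t[a:=^*\varepsilon]$ replaces inductively each subterm $(a\;v)$ by $(a\;(v\;\varepsilon))$. $\mathcal{N}$ is the set of strongly normalizable terms (no infinite $\triangleright$-reduction sequence). For sets $K,L$ of terms define: $K\to L=\{t\in\mathcal{T} : (t\;u)\in L \text{ for all } u\in K\}$; $K\wedge L=\{t\in\mathcal{T} : (t\;\pi_1)\in K \text{ and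 } (t\;\pi_2)\in L\}$; $K\vee L=\{t\in\mathcal{T} :$ for all $\lambda$-variables $x,y$ and all $u,v\in\mathcal{N}$, if $u[x:=r]\in\mathcal{N}$ and $v[y:=s]\in\mathcal{N}$ for all $r\in K$, $s\in L$, then $(t\;[x.u,y.v])\in\mathcal{N}\}$. The set $\mathcal{R}$ of reducibility candidates is the smallest set of sets of terms containing $\mathcal{N}$ and closed under $\to$, $\wedge$, $\vee$. *)

theory Defs
  imports Main
begin

text \<open>Terms of the lambda-mu calculus with pairs and sums, represented with de Bruijn
indices (so terms are identified up to renaming of bound variables).  There are two
independent index spaces: lambda-variables (LVar i) and mu-variables (the index a in
MApp a t).  Lam binds lambda-index 0, each branch of Cse binds lambda-index 0, and
Mu binds mu-index 0.\<close>

datatype trm =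
    LVar nat
  | Lam trm
  | App trm elim
  | Pr trm trm
  | In1 trm
  | In2 trm
  | Mu trm
  | MApp nat trm
and elim =
    ETm trm
  | Pi1
  | Pi2
  | Cse trm trm

primrec liftL :: "nat \<Rightarrow> trm \<Rightarrow> trm" and liftLe :: "nat \<Rightarrow> elim \<Rightarrow> elim" where
  "liftL k (LVar i) = (if i < k then LVar i else LVar (Suc i))"
| "liftL k (Lam t) = Lam (liftL (Suc k) t)"
| "liftL k (App t e) = App (liftL k t) (liftLe k e)"
| "liftL k (Pr t u) = Pr (liftL k t) (liftL k u)"
| "liftL k (In1 t) = In1 (liftL k t)"
| "liftL k (In2 t) = In2 (liftL k t)"
| "liftL k (Mu t) = Mu (liftL k t)"
| "liftL k (MApp a t) = MApp a (liftL k t)"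
| "liftLe k (ETm t) = ETm (liftL k t)"
| "liftLe k Pi1 = Pi1"
| "liftLe k Pi2 = Pi2"
| "liftLe k (Cse u v) = Cse (liftL (Suc k) u) (liftL (Suc k) v)"

primrec liftM :: "nat \<Rightarrow> trm \<Rightarrow> trm" and liftMe :: "nat \<Rightarrow> elim \<Rightarrow> elim" where
  "liftM k (LVar i) = LVar i"
| "liftM k (Lam t) = Lam (liftM k t)"
| "liftM k (App t e) = App (liftM k t) (liftMe k e)"
| "liftM k (Pr t u) = Pr (liftM k t) (liftM k u)"
| "liftM k (In1 t) = In1 (liftM k t)"
| "liftM k (In2 t) = In2 (liftM k t)"
| "liftM k (Mu t) = Mu (liftM (Suc k) t)"
| "liftM k (MApp a t) = MApp (if a < k then a else Suc a) (liftM k t)"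
| "liftMe k (ETm t) = ETm (liftM k t)"
| "liftMe k Pi1 = Pi1"
| "liftMe k Pi2 = Pi2"
| "liftMe k (Cse u v) = Cse (liftM k u) (liftM k v)"

primrec substL :: "trm \<Rightarrow> nat \<Rightarrow> trm \<Rightarrow> trm" and substLe :: "elim \<Rightarrow> nat \<Rightarrow> trm \<Rightarrow> elim" where
  "substL (LVar i) k s = (if i < k then LVar i else if i = k then s else LVar (i - 1))"
| "substL (Lam t) k s = Lam (substL t (Suc k) (liftL 0 s))"
| "substL (App t e) k s = App (substL t k s) (substLe e k s)"
| "substL (Pr t u) k s = Pr (substL t k s) (substL u k s)"
| "substL (In1 t) k s = In1 (substL t k s)"
| "substL (In2 t) k s = In2 (substL t k s)"
| "substL (Mu t) k s = Mu (substL t k (liftM 0 s))"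
| "substL (MApp a t) k s = MApp a (substL t k s)"
| "substLe (ETm t) k s = ETm (substL t k s)"
| "substLe Pi1 k s = Pi1"
| "substLe Pi2 k s = Pi2"
| "substLe (Cse u v) k s = Cse (substL u (Suc k) (liftL 0 s)) (substL v (Suc k) (liftL 0 s))"

text \<open>mu-substitution t[a:=* e]: every subterm (a v) becomes (a (v e)), inductively.\<close>
primrec substM :: "trm \<Rightarrow> nat \<Rightarrow> elim \<Rightarrow> trm" and substMe :: "elim \<Rightarrow> nat \<Rightarrow> elim \<Rightarrow> elim" where
  "substM (LVar i) k e = LVar i"
| "substM (Lam t) k e = Lam (substM t k (liftLe 0 e))"
| "substM (App t f) k e = App (substM t k e) (substMe f k e)"
| "substM (Pr t u) k e = Pr (substM t k e) (substM u k e)"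
| "substM (In1 t) k e = In1 (substM t k e)"
| "substM (In2 t) k e = In2 (substM t k e)"
| "substM (Mu t) k e = Mu (substM t (Suc k) (liftMe 0 e))"
| "substM (MApp a t) k e =
     (if a = k then MApp a (App (substM t k e) e) else MApp a (substM t k e))"
| "substMe (ETm t) k e = ETm (substM t k e)"
| "substMe Pi1 k e = Pi1"
| "substMe Pi2 k e = Pi2"
| "substMe (Cse u v) k e = Cse (substM u k (liftLe 0 e)) (substM v k (liftLe 0 e))"

inductive red :: "trm \<Rightarrow> trm \<Rightarrow> bool" and rede :: "elim \<Rightarrow> elim \<Rightarrow> bool" where
  beta: "red (App (Lam u) (ETm v)) (substL u 0 v)"
| proj1: "red (App (Pr t1 t2) Pi1) t1"
| proj2: "red (App (Pr t1 t2) Pi2) t2"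
| case1: "red (App (In1 t) (Cse u1 u2)) (substL u1 0 t)"
| case2: "red (App (In2 t) (Cse u1 u2)) (substL u2 0 t)"
| comm: "red (App (App t (Cse u1 u2)) e)
             (App t (Cse (App u1 (liftLe 0 e)) (App u2 (liftLe 0 e))))"
| mu: "red (App (Mu t) e) (Mu (substM t 0 (liftMe 0 e)))"
| c_lam: "red t t' \<Longrightarrow> red (Lam t) (Lam t')"
| c_app1: "red t t' \<Longrightarrow> red (App t e) (App t' e)"
| c_app2: "rede e e' \<Longrightarrow> red (App t e) (App t e')"
| c_pr1: "red t t' \<Longrightarrow> red (Pr t u) (Pr t' u)"
| c_pr2: "red u u' \<Longrightarrow> red (Pr t u) (Pr t u')"
| c_in1: "red t t' \<Longrightarrow> red (In1 t) (In1 t')"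
| c_in2: "red t t' \<Longrightarrow> red (In2 t) (In2 t')"
| c_mu: "red t t' \<Longrightarrow> red (Mu t) (Mu t')"
| c_mapp: "red t t' \<Longrightarrow> red (MApp a t) (MApp a t')"
| c_etm: "red t t' \<Longrightarrow> rede (ETm t) (ETm t')"
| c_cse1: "red u u' \<Longrightarrow> rede (Cse u v) (Cse u' v)"
| c_cse2: "red v v' \<Longrightarrow> rede (Cse u v) (Cse u v')"

definition SN :: "trm set" where
  "SN = {t. \<not> (\<exists>f. f 0 = t \<and> (\<forall>n. red (f n) (f (Suc n))))}"

definition arrow :: "trm set \<Rightarrow> trm set \<Rightarrow> trm set" where
  "arrow K L = {t. \<forall>u\<in>K. App t (ETm u) \<in> L}"

definition conjS :: "trm set \<Rightarrow> trm set \<Rightarrow> trm set" where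
  "conjS K L = {t. App t Pi1 \<in> K \<and> App t Pi2 \<in> L}"

text \<open>In de Bruijn form the bound variables x, y of [x.u, y.v] are index 0 of u and v.\<close>
definition disj :: "trm set \<Rightarrow> trm set \<Rightarrow> trm set" where
  "disj K L = {t. \<forall>u v. u \<in> SN \<and> v \<in> SN \<and> (\<forall>r\<in>K. substL u 0 r \<in> SN)
                      \<and> (\<forall>s\<in>L. substL v 0 s \<in> SN) \<longrightarrow> App t (Cse u v) \<in> SN}"

inductive_set RC :: "trm set set" where
  RC_SN: "SN \<in> RC"
| RC_arrow: "K \<in> RC \<Longrightarrow> L \<in> RC \<Longrightarrow> arrow K L \<in> RC"
| RC_conj: "K \<in> RC \<Longrightarrow> L \<in> RC \<Longrightarrow> conjS K L \<in> RC"
| RC_disj: "K \<in> RC \<Longrightarrow> L \<in> RC \<Longrightarrow> disj K L \<in> RC"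

end

theory Submission
  imports Defs
begin

abbreviation SNp :: "trm \<Rightarrow> bool" where "SNp \<equiv> Wellfounded.accp (\<lambda>a b. red b a)"

lemma accp_SN: "SNp t \<Longrightarrow> t \<in> SN"
proof (induct rule: Wellfounded.accp.induct)
  fix x assume IH: "\<And>y. red x y \<Longrightarrow> y \<in> SN"
  show "x \<in> SN"
  proof (rule ccontr)
    assume "x \<notin> SN"
    then obtain f where f: "f 0 = x" "\<forall>n. red (f n) (f (Suc n))" by (auto simp: SN_def)
    have "f (Suc 0) \<in> SN" using IH f by metis
    moreover have "\<forall>n. red (f (Suc n)) (f (Suc (Suc n)))" using f by simp
    ultimately show False unfolding SN_def by auto
  qed
qed

lemma SN_accp: "t \<in> SN \<Longrightarrow> SNp t"
proof (rule ccontr)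
  assume t: "t \<in> SN" and na: "\<not> SNp t"
  define g where "g s = (SOME s'. red s s' \<and> \<not> SNp s')" for s
  define f where "f n = (g ^^ n) t" for n
  have step: "\<not> SNp s \<Longrightarrow> red s (g s) \<and> \<not> SNp (g s)" for s
  proof -
    assume "\<not> SNp s"
    then obtain z where "red s z" "\<not> SNp z" by (rule not_accp_down)
    then show ?thesis unfolding g_def by (rule someI[where P="\<lambda>s'. red s s' \<and> \<not> SNp s'", OF conjI])
  qed
  have nf: "\<not> SNp (f n)" for n by (induction n) (auto simp: f_def na step)
  have "\<forall>n. red (f n) (f (Suc n))" using step nf by (simp add: f_def)
  moreover have "f 0 = t" by (simp add: f_def)
  ultimately show False using t unfolding SN_def by auto
qed

lemma SN_iff: "t \<in> SN \<longleftrightarrow> SNp t" using SN_accp accp_SN by blast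

definition good :: "elim \<Rightarrow> bool" where
  "good e \<longleftrightarrow> e = Pi1 \<or> e = Pi2 \<or> (\<exists>u. e = ETm u)"

inductive ns :: "trm \<Rightarrow> bool" where
  "ns (LVar x)"
| "ns t \<Longrightarrow> good e \<Longrightarrow> ns (App t e)"

inductive_cases redAppE: "red (App t e) r"
inductive_cases redLVarE: "red (LVar x) r"
inductive_cases redeETmE: "rede (ETm u) e'"
inductive_cases redeCseE: "rede (Cse u v) e'"
inductive_cases redePi1E: "rede Pi1 e'"
inductive_cases redePi2E: "rede Pi2 e'"

lemma ns_App_inv:
  assumes "ns t" "red (App t e) r"
  shows "(\<exists>t'. r = App t' e \<and> red t t') \<or> (\<exists>e'. r = App t e' \<and> rede e e')"
  using assms(2)
  by (cases rule: redAppE) (use assms(1) in \<open>auto elim: ns.cases simp: good_def\<close>)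

lemma ns_red: "ns t \<Longrightarrow> red t t' \<Longrightarrow> ns t'"
proof (induction t arbitrary: t' rule: ns.induct)
  case (1 x) then show ?case by (auto elim: redLVarE)
next
  case (2 t e)
  from ns_App_inv[OF 2(1) 2(4)] show ?case
    using 2 by (auto simp: good_def intro!: ns.intros elim: redeETmE redePi1E redePi2E)
qed

lemma LVar_SN: "SNp (LVar x)"
  by (rule Wellfounded.accp.intros) (auto elim: redLVarE)

lemma app_ETm_SN: "SNp t \<Longrightarrow> ns t \<Longrightarrow> SNp u \<Longrightarrow> SNp (App t (ETm u))"
proof (induct t arbitrary: u rule: Wellfounded.accp.induct)
  fix t assume IHt: "\<And>y u. red t y \<Longrightarrow> ns y \<Longrightarrow> SNp u \<Longrightarrow> SNp (App y (ETm u))"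
  fix u assume nt: "ns t" and su: "SNp u"
  from su show "SNp (App t (ETm u))"
  proof (induct u rule: Wellfounded.accp.induct)
    fix u assume IHu: "\<And>y. red u y \<Longrightarrow> SNp (App t (ETm y))" and
      su: "\<And>y. red u y \<Longrightarrow> SNp y"
    have su': "SNp u" using su by (rule Wellfounded.accp.intros)
    show "SNp (App t (ETm u))"
    proof (rule Wellfounded.accp.intros)
      fix r assume "red (App t (ETm u)) r"
      from ns_App_inv[OF nt this] show "SNp r"
        using IHt IHu su' nt ns_red by (auto elim: redeETmE)
    qed
  qed
qed

lemma app_Pi_SN: "SNp t \<Longrightarrow> ns t \<Longrightarrow> e = Pi1 \<or> e = Pi2 \<Longrightarrow> SNp (App t e)"
proof (induct t rule: Wellfounded.accp.induct)
  fix t assume IHt: "\<And>y. red t y \<Longrightarrow> ns y \<Longrightarrow> e = Pi1 \<or> e = Pi2 \<Longrightarrow> SNp (App y e)"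
  assume nt: "ns t" and e: "e = Pi1 \<or> e = Pi2"
  show "SNp (App t e)"
  proof (rule Wellfounded.accp.intros)
    fix r assume "red (App t e) r"
    from ns_App_inv[OF nt this] show "SNp r"
      using IHt nt ns_red e by (auto elim: redePi1E redePi2E)
  qed
qed

lemma app_Cse_SN: "SNp t \<Longrightarrow> ns t \<Longrightarrow> SNp u \<Longrightarrow> SNp v \<Longrightarrow> SNp (App t (Cse u v))"
proof (induct t arbitrary: u v rule: Wellfounded.accp.induct)
  fix t assume IHt: "\<And>y u v. red t y \<Longrightarrow> ns y \<Longrightarrow> SNp u \<Longrightarrow> SNp v \<Longrightarrow> SNp (App y (Cse u v))"
  fix u v assume nt: "ns t" and su: "SNp u" and sv: "SNp v"
  from su sv show "SNp (App t (Cse u v))"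
  proof (induct u arbitrary: v rule: Wellfounded.accp.induct)
    fix u assume IHu: "\<And>y v. red u y \<Longrightarrow> SNp v \<Longrightarrow> SNp (App t (Cse y v))" and
      su: "\<And>y. red u y \<Longrightarrow> SNp y"
    have su': "SNp u" using su by (rule Wellfounded.accp.intros)
    fix v assume sv: "SNp v"
    from sv show "SNp (App t (Cse u v))"
    proof (induct v rule: Wellfounded.accp.induct)
      fix v assume IHv: "\<And>y. red v y \<Longrightarrow> SNp (App t (Cse u y))" and
        sv: "\<And>y. red v y \<Longrightarrow> SNp y"
      have sv': "SNp v" using sv by (rule Wellfounded.accp.intros)
      show "SNp (App t (Cse u v))"
      proof (rule Wellfounded.accp.intros)
        fix r assume "red (App t (Cse u v)) r"
        from ns_App_inv[OF nt this] show "SNp r"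
          using IHt IHu IHv su' sv' nt ns_red by (auto elim: redeCseE)
      qed
    qed
  qed
qed

definition gd :: "elim \<Rightarrow> bool" where
  "gd e \<longleftrightarrow> good e \<and> (\<forall>u. e = ETm u \<longrightarrow> u \<in> SN)"

lemma stk_ns: "\<forall>e\<in>set es. gd e \<Longrightarrow> ns (foldl App (LVar x) es)"
  by (induction es rule: rev_induct) (auto simp: gd_def intro: ns.intros)

lemma stk_SN: "\<forall>e\<in>set es. gd e \<Longrightarrow> SNp (foldl App (LVar x) es)"
proof (induction es rule: rev_induct)
  case Nil then show ?case using LVar_SN by simp
next
  case (snoc e es)
  then have s: "SNp (foldl App (LVar x) es)" and g: "gd e" by simp_all
  have n: "ns (foldl App (LVar x) es)" using snoc.prems stk_ns by simp
  show ?case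
  proof (cases e)
    case (ETm u)
    then have "SNp u" using g SN_accp unfolding gd_def by blast
    then show ?thesis using app_ETm_SN[OF s n] ETm by simp
  next
    case Pi1 then show ?thesis using app_Pi_SN[OF s n] by simp
  next
    case Pi2 then show ?thesis using app_Pi_SN[OF s n] by simp
  next
    case (Cse u v) then show ?thesis using g by (simp add: gd_def good_def)
  qed
qed

lemma App_SN: "App t e \<in> SN \<Longrightarrow> t \<in> SN"
proof -
  assume a: "App t e \<in> SN"
  show "t \<in> SN"
  proof (rule ccontr)
    assume "t \<notin> SN"
    then obtain f where f: "f 0 = t" "\<forall>n. red (f n) (f (Suc n))" unfolding SN_def by blast
    define g where "g n = App (f n) e" for n
    have "g 0 = App t e" using f by (simp add: g_def)
    moreover have "\<forall>n. red (g n) (g (Suc n))" using f by (simp add: g_def red_rede.c_app1)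
    ultimately show False using a unfolding SN_def by blast
  qed
qed

lemma main: "R \<in> RC \<Longrightarrow> R \<subseteq> SN \<and> (\<forall>x es. (\<forall>e\<in>set es. gd e) \<longrightarrow> foldl App (LVar x) es \<in> R)"
proof (induction rule: RC.induct)
  case RC_SN then show ?case using stk_SN accp_SN by blast
next
  case (RC_arrow K L)
  have "LVar 0 \<in> K" using RC_arrow.IH(1)[THEN conjunct2, rule_format, of "[]"] by simp
  then have 1: "arrow K L \<subseteq> SN" using RC_arrow.IH(2) App_SN by (auto simp: arrow_def)
  have 2: "foldl App (LVar x) es \<in> arrow K L" if "\<forall>e\<in>set es. gd e" for x es
  proof -
    have "foldl App (LVar x) (es @ [ETm u]) \<in> L" if "u \<in> K" for u
    proof -
      have "\<forall>e\<in>set (es @ [ETm u]). gd e" using RC_arrow.IH(1) that \<open>\<forall>e\<in>set es. gd e\<close> by (auto simp: gd_def good_def)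
      then show ?thesis using RC_arrow.IH(2)[THEN conjunct2, rule_format] by blast
    qed
    then show ?thesis by (auto simp: arrow_def)
  qed
  show ?case using 1 2 by blast
next
  case (RC_conj K L)
  have 1: "conjS K L \<subseteq> SN" using RC_conj.IH App_SN by (auto simp: conjS_def)
  have 2: "foldl App (LVar x) es \<in> conjS K L" if "\<forall>e\<in>set es. gd e" for x es
  proof -
    have "foldl App (LVar x) (es @ [Pi1]) \<in> K" "foldl App (LVar x) (es @ [Pi2]) \<in> L"
    proof -
      have "\<forall>e\<in>set (es @ [Pi1]). gd e" "\<forall>e\<in>set (es @ [Pi2]). gd e" using that by (auto simp: gd_def good_def)
      then show "foldl App (LVar x) (es @ [Pi1]) \<in> K" "foldl App (LVar x) (es @ [Pi2]) \<in> L"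
        using RC_conj.IH(1)[THEN conjunct2, rule_format] RC_conj.IH(2)[THEN conjunct2, rule_format] by blast+
    qed
    then show ?thesis by (auto simp: conjS_def)
  qed
  show ?case using 1 2 by blast
next
  case (RC_disj K L)
  have 1: "disj K L \<subseteq> SN"
  proof
    fix t assume "t \<in> disj K L"
    moreover have "LVar 0 \<in> SN" using LVar_SN SN_iff by blast
    moreover have "\<forall>r\<in>K. substL (LVar 0) 0 r \<in> SN" "\<forall>r\<in>L. substL (LVar 0) 0 r \<in> SN"
      using RC_disj.IH by auto
    ultimately have "App t (Cse (LVar 0) (LVar 0)) \<in> SN"
      unfolding disj_def by blast
    then show "t \<in> SN" by (rule App_SN)
  qed
  have 2: "foldl App (LVar x) es \<in> disj K L" if "\<forall>e\<in>set es. gd e" for x es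
    unfolding disj_def
  proof (intro CollectI allI impI)
    fix u v assume "u \<in> SN \<and> v \<in> SN \<and> (\<forall>r\<in>K. substL u 0 r \<in> SN) \<and> (\<forall>s\<in>L. substL v 0 s \<in> SN)"
    then have "SNp u" "SNp v" using SN_accp by blast+
    then show "App (foldl App (LVar x) es) (Cse u v) \<in> SN"
      using app_Cse_SN[OF stk_SN[OF that] stk_ns[OF that]] accp_SN by blast
  qed
  show ?case using 1 2 by blast
qed

theorem lemma5:
  assumes "R \<in> RC"
  shows "R \<subseteq> SN \<and> (\<forall>x. LVar x \<in> R)"
proof -
  have "LVar x \<in> R" for x using main[OF assms, THEN conjunct2, rule_format, of "[]" x] by simp
  then show ?thesis using main[OF assms] by blast
qed

end
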